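(* Let $\alpha>0$ and let $(d_k:k\geq1)$ be a sequence of positive integers with $d_{k+1}\geq(1+\alpha)d_k$ for all $k$. Let $C_\alpha>0$ be a constant such that $\big\|(g_k'/d_k)_{k\geq1}\big\|_{L^1(\ell^2)}\leq C_\alpha\|(g_k)_{k\geq1}\|_{L^1(\ell^2)}$ for every sequence $g_k\in H^1_{d_k}(\mathbb{D})$; such a constant exists. Let $(f_k:k\geq1)$ satisfy $f_k\in H^1_{d_k}(\mathbb{D})$, let $0<\varepsilon<\frac12$, and let $(M_k:k\geq1)$ be positive integers with $d_k\leq\varepsilon C_\alpha^{-1}M_k$ for all $k$. Then $$(1-\varepsilon)\big\|(\mathbb{E}_{M_k}|f_k|)_{k=1}^\infty\big\|_{L^1(\ell^2)}\leq\big\|(f_k)_{k=1}^\infty\big\|_{L^1(\ell^2)}\leq\frac{1-\varepsilon}{1-2\varepsilon}\big\|(\mathbb{E}_{M_k}f_k)_{k=1}^\infty\big\|_{L^1(\ell^2)}.$$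
   Context: $\mathbb{T}$ is identified with $[0,1)$ with Lebesgue measure, and functions are viewed as functions of $t\in\mathbb{T}$. Define $H^1_n(\mathbb{D})=\mathrm{span}\{e^{2\pi ijt}:0\leq j\leq n\}$, and let $g'$ denote the derivative in $t$. For a sequence of functions $(g_k)$ on $\mathbb{T}$, define $\|(g_k)\|_{L^1(\ell^2)}=\int_{\mathbb{T}}\big(\sum_k|g_k(t)|^2\big)^{1/2}dt$. For a positive integer $N$, $$\mathbb{E}_Ng=\sum_{k=0}^{N-1}N\,\mathbb{1}_{[k/N,(k+1)/N)}\int_{k/N}^{(k+1)/N}g(x)\,dx.$$ *)

theory Defs
  imports "HOL-Analysis.Analysis"
begin

text \<open>Analytic trigonometric polynomials of degree at most n, as functions of t
  (the torus T is identified with [0,1); the functions are 1-periodic).\<close>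
definition H1 :: "nat \<Rightarrow> (real \<Rightarrow> complex) set" where
  "H1 n = {f. \<exists>c :: nat \<Rightarrow> complex.
       \<forall>t. f t = (\<Sum>j\<le>n. c j * exp (2 * of_real pi * \<i> * of_nat j * of_real t))}"

definition l2pt :: "(nat \<Rightarrow> real \<Rightarrow> 'a::real_normed_vector) \<Rightarrow> real \<Rightarrow> ennreal" where
  "l2pt g t = (if summable (\<lambda>k. (norm (g k t))\<^sup>2)
               then ennreal (sqrt (\<Sum>k. (norm (g k t))\<^sup>2)) else top)"

definition L1l2 :: "(nat \<Rightarrow> real \<Rightarrow> 'a::real_normed_vector) \<Rightarrow> ennreal" where
  "L1l2 g = (\<integral>\<^sup>+ t \<in> {0..<1}. l2pt g t \<partial>lborel)"

definition condE :: "nat \<Rightarrow> (real \<Rightarrow> 'a::real_normed_vector) \<Rightarrow> real \<Rightarrow> 'a" where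
  "condE N g t = (\<Sum>k<N. (real N * indicator {real k / real N ..< real (k+1) / real N} t)
                      *\<^sub>R integral {real k / real N .. real (k+1) / real N} g)"

end

theory Submission
  imports Defs
begin



definition ee :: "nat \<Rightarrow> real \<Rightarrow> complex" where
  "ee j t = exp (2 * of_real pi * \<i> * of_nat j * of_real t)"

definition aa :: "nat \<Rightarrow> complex" where "aa j = 2 * of_real pi * \<i> * of_nat j"

definition TP :: "(nat \<Rightarrow> complex) \<Rightarrow> nat \<Rightarrow> nat \<Rightarrow> real \<Rightarrow> complex" where
  "TP c n m t = (\<Sum>j\<le>n. c j * aa j ^ m * ee j t)"

lemma ee_alt: "ee j t = exp (aa j * of_real t)"
  by (simp add: ee_def aa_def)

lemma norm_ee[simp]: "norm (ee j t) = 1"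
proof -
  have "2 * of_real pi * \<i> * of_nat j * of_real t = \<i> * complex_of_real (2*pi*j*t)" by simp
  then show ?thesis unfolding ee_def by (metis norm_exp_i_times)
qed

lemma TP_deriv: "(TP c n m has_vector_derivative TP c n (Suc m) t) (at t)"
proof -
  have "((\<lambda>t. c j * aa j ^ m * ee j t) has_vector_derivative c j * aa j ^ Suc m * ee j t) (at t)" for j
  proof -
    have "((\<lambda>z. c j * aa j ^ m * exp (aa j * z)) has_field_derivative c j * aa j ^ Suc m * exp (aa j * of_real t)) (at (of_real t))"
      by (auto intro!: derivative_eq_intros)
    from has_vector_derivative_real_field[OF this] show ?thesis by (simp add: ee_alt)
  qed
  then show ?thesis unfolding TP_def by (intro has_vector_derivative_sum) auto
qed

lemma TP_H1: "(\<lambda>t. TP c n m t / x) \<in> H1 n"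
  unfolding H1_def TP_def
  by (rule CollectI, rule exI[of _ "\<lambda>j. c j * aa j ^ m / x"]) (auto simp: ee_def sum_divide_distrib)

lemma exp_rem:
  fixes z :: "'a::{real_normed_field,banach}"
  assumes "norm z \<le> r"
  shows "norm (exp z - (\<Sum>m\<le>N. z^m /\<^sub>R fact m)) \<le> exp r - (\<Sum>m\<le>N. r^m /\<^sub>R fact m)"
proof -
  have A: "(\<lambda>i. z^(i + Suc N) /\<^sub>R fact (i + Suc N)) sums (exp z - (\<Sum>m<Suc N. z^m /\<^sub>R fact m))"
    by (rule sums_split_initial_segment[OF exp_converges])
  have B: "(\<lambda>i. r^(i + Suc N) /\<^sub>R fact (i + Suc N)) sums (exp r - (\<Sum>m<Suc N. r^m /\<^sub>R fact m))"
    by (rule sums_split_initial_segment[OF exp_converges])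
  have le0: "norm (z^k /\<^sub>R fact k) \<le> r^k /\<^sub>R fact k" for k
  proof -
    have "norm z ^ k \<le> r ^ k" by (rule power_mono) (use assms in auto)
    then show ?thesis by (simp add: norm_power divide_right_mono)
  qed
  have le: "norm (z^(i + Suc N) /\<^sub>R fact (i + Suc N)) \<le> r^(i + Suc N) /\<^sub>R fact (i + Suc N)" for i
    by (rule le0)
  have sn: "summable (\<lambda>i. norm (z^(i + Suc N) /\<^sub>R fact (i + Suc N)))"
    by (rule summable_comparison_test'[OF sums_summable[OF B], of 0]) (use le in auto)
  have "norm (exp z - (\<Sum>m<Suc N. z^m /\<^sub>R fact m)) \<le> (\<Sum>i. norm (z^(i + Suc N) /\<^sub>R fact (i + Suc N)))"
    using summable_norm[OF sn] sums_unique[OF A] by simp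
  also have "\<dots> \<le> (\<Sum>i. r^(i + Suc N) /\<^sub>R fact (i + Suc N))"
    by (rule suminf_le[OF le sn sums_summable[OF B]])
  also have "\<dots> = exp r - (\<Sum>m<Suc N. r^m /\<^sub>R fact m)" using sums_unique[OF B] by simp
  finally show ?thesis by (simp add: lessThan_Suc_atMost)
qed

lemma exp_rem_tendsto:
  "(\<lambda>N. exp r - (\<Sum>m\<le>N. r^m /\<^sub>R fact m)) \<longlonglongrightarrow> (0::real)"
proof -
  have "(\<lambda>N. \<Sum>m<N. r^m /\<^sub>R fact m) \<longlonglongrightarrow> exp r" using exp_converges[of r] by (simp add: sums_def)
  then have "(\<lambda>N. \<Sum>m<Suc N. r^m /\<^sub>R fact m) \<longlonglongrightarrow> exp r" by (rule LIMSEQ_Suc)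
  then have "(\<lambda>N. exp r - (\<Sum>m<Suc N. r^m /\<^sub>R fact m)) \<longlonglongrightarrow> exp r - exp r"
    by (intro tendsto_intros)
  then show ?thesis by (simp add: lessThan_Suc_atMost)
qed

lemma exp_rem_mono:
  fixes r s :: real
  assumes "0 \<le> r" "r \<le> s"
  shows "exp r - (\<Sum>m\<le>N. r^m /\<^sub>R fact m) \<le> exp s - (\<Sum>m\<le>N. s^m /\<^sub>R fact m)"
  using exp_rem[of r s N] assms by auto


lemma sum_head0: "(\<Sum>m\<le>(N::nat). g m) = g 0 + (\<Sum>m\<in>{1..N}. (g m :: 'a::comm_monoid_add))"
  by (induction N) (auto simp: add.assoc)

lemma TP_taylor:
  "norm (TP c n 0 s - TP c n 0 t - (\<Sum>m\<in>{1..N}. TP c n m t * of_real ((s-t)^m / fact m)))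
     \<le> (\<Sum>j\<le>n. norm (c j)) * (exp (2*pi*n*\<bar>s-t\<bar>) - (\<Sum>m\<le>N. (2*pi*n*\<bar>s-t\<bar>)^m /\<^sub>R fact m))"
proof -
  define z where "z j = aa j * of_real (s-t)" for j
  define R where "R = exp (2*pi*n*\<bar>s-t\<bar>) - (\<Sum>m\<le>N. (2*pi*n*\<bar>s-t\<bar>)^m /\<^sub>R fact m)"
  have es: "ee j s = ee j t * exp (z j)" for j
    unfolding ee_alt z_def by (simp add: exp_add[symmetric] algebra_simps)
  have sw: "(\<Sum>m\<in>{1..N}. TP c n m t * of_real ((s-t)^m / fact m))
      = (\<Sum>j\<le>n. c j * ee j t * (\<Sum>m\<in>{1..N}. z j ^m /\<^sub>R fact m))"
    unfolding TP_def sum_distrib_right sum_distrib_left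
    by (subst sum.swap) (auto intro!: sum.cong simp: z_def scaleR_conv_of_real power_mult_distrib divide_inverse mult_ac)
  have "TP c n 0 s - TP c n 0 t - (\<Sum>m\<in>{1..N}. TP c n m t * of_real ((s-t)^m / fact m))
      = (\<Sum>j\<le>n. c j * ee j t * (exp (z j) - (\<Sum>m\<le>N. z j ^m /\<^sub>R fact m)))"
    unfolding sw unfolding TP_def es sum_head0[of _ N]
    by (simp add: algebra_simps sum_subtractf[symmetric] sum.distrib[symmetric])
  also have "norm \<dots> \<le> (\<Sum>j\<le>n. norm (c j * ee j t * (exp (z j) - (\<Sum>m\<le>N. z j ^m /\<^sub>R fact m))))"
    by (rule norm_sum)
  also have "\<dots> \<le> (\<Sum>j\<le>n. norm (c j) * R)"
  proof (rule sum_mono)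
    fix j assume j: "j \<in> {..n}"
    have "norm (z j) = 2*pi*j*\<bar>s-t\<bar>" by (simp add: z_def aa_def norm_mult of_real_diff[symmetric] del: of_real_diff)
    also have "\<dots> \<le> 2*pi*n*\<bar>s-t\<bar>" using j by (auto intro!: mult_right_mono)
    finally have "norm (exp (z j) - (\<Sum>m\<le>N. z j ^m /\<^sub>R fact m)) \<le> R"
      unfolding R_def by (rule exp_rem)
    then show "norm (c j * ee j t * (exp (z j) - (\<Sum>m\<le>N. z j ^m /\<^sub>R fact m))) \<le> norm (c j) * R"
      by (simp add: norm_mult mult_left_mono)
  qed
  finally show ?thesis by (simp add: R_def sum_distrib_right)
qed


lemma floor_facts:
  assumes N: "N > 0" and t: "t \<in> {0..<1::real}"
  defines "k0 \<equiv> nat \<lfloor>real N * t\<rfloor>"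
  shows "real k0 / N \<le> t" "t < real (k0+1) / N" "k0 < N"
    "\<And>k. t \<in> {real k / real N ..< real (k+1) / real N} \<longleftrightarrow> k = k0"
proof -
  have nt: "0 \<le> real N * t" using t by auto
  have rk: "real k0 = of_int \<lfloor>real N * t\<rfloor>" unfolding k0_def using nt by simp
  have a: "real k0 \<le> real N * t" "real N * t < real k0 + 1" unfolding rk by linarith+
  show "real k0 / N \<le> t" "t < real (k0+1) / N" using a N by (auto simp: field_simps)
  have "real N * t < real N" using t N by auto
  with a show "k0 < N" by linarith
  fix k
  show "t \<in> {real k / real N ..< real (k+1) / real N} \<longleftrightarrow> k = k0"
  proof
    assume "t \<in> {real k / real N ..< real (k+1) / real N}"
    then have "real k \<le> real N * t" "real N * t < real k + 1" using N by (auto simp: field_simps)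
    with a have "real k < real k0 + 1" "real k0 < real k + 1" by linarith+
    then show "k = k0" by linarith
  next
    assume "k = k0" then show "t \<in> {real k / real N ..< real (k+1) / real N}"
      using a N by (auto simp: field_simps)
  qed
qed

lemma condE_at:
  assumes N: "N > 0" and t: "t \<in> {0..<1::real}"
  defines "k0 \<equiv> nat \<lfloor>real N * t\<rfloor>"
  shows "condE N g t = real N *\<^sub>R integral {real k0 / real N .. real (k0+1) / real N} g"
proof -
  note ff = floor_facts[OF N t]
  have "condE N g t = (\<Sum>k<N. if k = k0 then real N *\<^sub>R integral {real k / real N .. real (k+1) / real N} g else 0)"
  proof -
    have "indicator {real k / real N ..< real (k+1) / real N} t = (if k = k0 then 1 else (0::real))" for k
      using ff(4)[of k] unfolding k0_def[symmetric] by (auto simp: indicator_def)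
    then show ?thesis unfolding condE_def by (intro sum.cong refl) auto
  qed
  also have "\<dots> = real N *\<^sub>R integral {real k0 / real N .. real (k0+1) / real N} g"
    using ff(3) unfolding k0_def by simp
  finally show ?thesis .
qed

lemma condE_bound:
  fixes g :: "real \<Rightarrow> 'a::banach"
  assumes N: "N > 0" and t: "t \<in> {0..<1::real}" and g: "continuous_on {0..1} g" and B: "0 \<le> B"
    and bd: "\<And>s. \<bar>s - t\<bar> \<le> 1 / real N \<Longrightarrow> s \<in> {0..1} \<Longrightarrow> norm (g s - g t) \<le> B"
  shows "norm (condE N g t - g t) \<le> B"
proof -
  define k0 where "k0 = nat \<lfloor>real N * t\<rfloor>"
  define a where "a = real k0 / real N"
  define b where "b = real (k0+1) / real N"
  note ff = floor_facts[OF N t, folded k0_def a_def b_def]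
  have ab: "b - a = 1 / real N" unfolding a_def b_def using N by (simp add: field_simps)
  have sub: "{a..b} \<subseteq> {0..1}" using ff(3) N unfolding a_def b_def by (auto simp: field_simps)
  have int: "g integrable_on {a..b}"
    by (rule integrable_continuous_real, rule continuous_on_subset[OF g sub])
  have hi: "((\<lambda>s. g s - g t) has_integral (integral {a..b} g - (b - a) *\<^sub>R g t)) (cbox a b)"
    using has_integral_diff[OF integrable_integral[OF int] has_integral_const_real[of "g t" a b]] ff
    by (simp add: a_def b_def)
  have "norm (integral {a..b} g - (b - a) *\<^sub>R g t) \<le> B * measure lborel (cbox a b)"
  proof (rule has_integral_bound[OF B hi])
    fix s assume s: "s \<in> cbox a b"
    then have "\<bar>s - t\<bar> \<le> 1 / real N" using ff(1,2) ab by auto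
    moreover have "s \<in> {0..1}" using s sub by auto
    ultimately show "norm (g s - g t) \<le> B" by (rule bd)
  qed
  also have "measure lborel (cbox a b) = 1 / real N" using ab ff by simp
  finally have X: "norm (integral {a..b} g - (1 / real N) *\<^sub>R g t) \<le> B / real N" using ab by simp
  have "condE N g t - g t = real N *\<^sub>R (integral {a..b} g - (1 / real N) *\<^sub>R g t)"
    unfolding condE_at[OF N t] k0_def[symmetric] a_def[symmetric] b_def[symmetric]
    using N by (simp add: scaleR_diff_right)
  then have "norm (condE N g t - g t) = real N * norm (integral {a..b} g - (1 / real N) *\<^sub>R g t)"
    by simp
  also have "\<dots> \<le> real N * (B / real N)" by (rule mult_left_mono[OF X]) simp
  also have "\<dots> = B" using N by simp
  finally show ?thesis .
qed

abbreviation "mu \<equiv> restrict_space lborel {0..<1::real}"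

definition NK :: "nat \<Rightarrow> (nat \<Rightarrow> real \<Rightarrow> 'a::real_normed_vector) \<Rightarrow> ennreal" where
  "NK K g = (\<integral>\<^sup>+ t. ennreal (L2_set (\<lambda>k. norm (g k t)) {..<K}) \<partial>mu)"

lemma L1l2_mu: "L1l2 g = (\<integral>\<^sup>+ t. l2pt g t \<partial>mu)"
  unfolding L1l2_def by (subst nn_integral_restrict_space) auto

lemma space_mu[simp]: "space mu = {0..<1}" by (simp add: space_restrict_space)

lemma emeasure_mu: "emeasure mu {0..<1} = 1"
  by (subst emeasure_restrict_space) auto

lemma meas_L2:
  fixes g :: "nat \<Rightarrow> real \<Rightarrow> 'a::real_normed_vector"
  assumes "\<And>k. g k \<in> borel_measurable lborel"
  shows "(\<lambda>t. ennreal (L2_set (\<lambda>k. norm (g k t)) {..<K})) \<in> borel_measurable mu"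
proof -
  have "(\<lambda>t. ennreal (L2_set (\<lambda>k. norm (g k t)) {..<K})) \<in> borel_measurable lborel"
    unfolding L2_set_def using assms by measurable
  then show ?thesis by (rule measurable_restrict_space1)
qed

lemma L2_le_l2pt: "ennreal (L2_set (\<lambda>k. norm (g k t)) {..<K}) \<le> l2pt g t"
proof (cases "summable (\<lambda>k. (norm (g k t))\<^sup>2)")
  case True
  then have "(\<Sum>k<K. (norm (g k t))\<^sup>2) \<le> (\<Sum>k. (norm (g k t))\<^sup>2)"
    by (intro sum_le_suminf) auto
  then show ?thesis using True unfolding l2pt_def L2_set_def by (auto intro!: ennreal_leI)
qed (simp add: l2pt_def)

lemma NK_le_L1l2: "NK K g \<le> L1l2 g"
  unfolding NK_def L1l2_mu by (intro nn_integral_mono L2_le_l2pt)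

lemma L1l2_trunc:
  assumes "\<And>k t. k \<ge> K \<Longrightarrow> g k t = 0"
  shows "L1l2 g = NK K g"
proof -
  have "l2pt g t = ennreal (L2_set (\<lambda>k. norm (g k t)) {..<K})" for t
  proof -
    have z: "\<And>k. k \<notin> {..<K} \<Longrightarrow> (norm (g k t))\<^sup>2 = 0" using assms by auto
    have "summable (\<lambda>k. (norm (g k t))\<^sup>2)" by (rule summable_finite[of "{..<K}", OF _ z]) auto
    moreover have "(\<Sum>k. (norm (g k t))\<^sup>2) = (\<Sum>k<K. (norm (g k t))\<^sup>2)" by (rule suminf_finite[of "{..<K}", OF _ z]) auto
    ultimately show ?thesis unfolding l2pt_def L2_set_def by simp
  qed
  then have "l2pt g = (\<lambda>t. ennreal (L2_set (\<lambda>k. norm (g k t)) {..<K}))" by (rule ext)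
  then show ?thesis unfolding L1l2_mu NK_def by simp
qed

lemma L2_incseq: "incseq (\<lambda>K. ennreal (L2_set (\<lambda>k. norm (g k t)) {..<K}))"
  unfolding incseq_def L2_set_def
  by (auto intro!: ennreal_leI real_sqrt_le_mono sum_mono2)

lemma l2pt_le_SUP: "l2pt g t \<le> (SUP K. ennreal (L2_set (\<lambda>k. norm (g k t)) {..<K}))"
proof (cases "summable (\<lambda>k. (norm (g k t))\<^sup>2)")
  case True
  have "(\<lambda>K. \<Sum>k<K. (norm (g k t))\<^sup>2) \<longlonglongrightarrow> (\<Sum>k. (norm (g k t))\<^sup>2)"
    using True by (rule summable_LIMSEQ)
  then have "(\<lambda>K. ennreal (L2_set (\<lambda>k. norm (g k t)) {..<K})) \<longlonglongrightarrow> ennreal (sqrt (\<Sum>k. (norm (g k t))\<^sup>2))"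
    unfolding L2_set_def by (intro tendsto_intros)
  then have "ennreal (sqrt (\<Sum>k. (norm (g k t))\<^sup>2)) \<le> (SUP K. ennreal (L2_set (\<lambda>k. norm (g k t)) {..<K}))"
    by (rule tendsto_le[OF sequentially_bot tendsto_const]) (rule always_eventually, rule allI, rule SUP_upper, simp)
  moreover have "l2pt g t = ennreal (sqrt (\<Sum>k. (norm (g k t))\<^sup>2))" using True by (simp add: l2pt_def)
  ultimately show ?thesis by (simp only:)
next
  case False
  have "\<exists>K. real n \<le> L2_set (\<lambda>k. norm (g k t)) {..<K}" for n
  proof (rule ccontr)
    assume "\<not> ?thesis"
    then have "\<And>K. (\<Sum>k<K. (norm (g k t))\<^sup>2) \<le> (real n)\<^sup>2"
      unfolding L2_set_def by (metis linorder_le_cases of_nat_0_le_iff real_le_rsqrt)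
    then have "summable (\<lambda>k. (norm (g k t))\<^sup>2)" by (intro summableI_nonneg_bounded) auto
    with False show False by simp
  qed
  then have "(SUP K. ennreal (L2_set (\<lambda>k. norm (g k t)) {..<K})) = top"
    by (intro ennreal_SUP_eq_top) (auto simp: ennreal_of_nat_eq_real_of_nat intro: ennreal_leI)
  then show ?thesis by (simp only: top_greatest)
qed

lemma L1l2_le_SUP:
  fixes g :: "nat \<Rightarrow> real \<Rightarrow> 'a::real_normed_vector"
  assumes "\<And>k. g k \<in> borel_measurable lborel"
  shows "L1l2 g \<le> (SUP K. NK K g)"
proof -
  have "L1l2 g \<le> (\<integral>\<^sup>+ t. (SUP K. ennreal (L2_set (\<lambda>k. norm (g k t)) {..<K})) \<partial>mu)"
    unfolding L1l2_mu by (rule nn_integral_mono) (rule l2pt_le_SUP)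
  also have "\<dots> = (SUP K. NK K g)"
  proof -
    have inc: "incseq (\<lambda>K t. ennreal (L2_set (\<lambda>k. norm (g k t)) {..<K}))"
    proof (rule incseq_SucI, rule le_funI)
      fix K t show "ennreal (L2_set (\<lambda>k. norm (g k t)) {..<K}) \<le> ennreal (L2_set (\<lambda>k. norm (g k t)) {..<Suc K})"
        by (rule incseqD[OF L2_incseq]) simp
    qed
    show ?thesis unfolding NK_def
      by (rule nn_integral_monotone_convergence_SUP[OF inc meas_L2[OF assms]])
  qed
  finally show ?thesis .
qed


lemma L2_sum_le:
  assumes "finite M"
  shows "L2_set (\<lambda>k. \<Sum>m\<in>M. f m k) A \<le> (\<Sum>m\<in>M. L2_set (f m) A)"
  using assms
proof (induction M rule: finite_induct)
  case empty then show ?case by (simp add: L2_set_def)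
next
  case (insert x F)
  have "L2_set (\<lambda>k. \<Sum>m\<in>insert x F. f m k) A = L2_set (\<lambda>k. f x k + (\<Sum>m\<in>F. f m k)) A"
    using insert by simp
  also have "\<dots> \<le> L2_set (f x) A + L2_set (\<lambda>k. \<Sum>m\<in>F. f m k) A" by (rule L2_set_triangle_ineq)
  also have "\<dots> \<le> L2_set (f x) A + (\<Sum>m\<in>F. L2_set (f m) A)" using insert by simp
  finally show ?case using insert by simp
qed

lemma core:
  fixes A :: "nat \<Rightarrow> real \<Rightarrow> 'a::real_normed_vector" and Bv :: "nat \<Rightarrow> real \<Rightarrow> 'b::real_normed_vector"
    and G :: "nat \<Rightarrow> nat \<Rightarrow> real \<Rightarrow> 'c::real_normed_vector"
  assumes mA: "\<And>k. A k \<in> borel_measurable lborel" and mB: "\<And>k. Bv k \<in> borel_measurable lborel"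
    and mG: "\<And>m k. G m k \<in> borel_measurable lborel"
    and a: "\<And>m. 0 \<le> a m"
    and rho0: "\<And>N k. 0 \<le> rho N k" and rho_lim: "\<And>k. (\<lambda>N. rho N k) \<longlonglongrightarrow> 0"
    and pt: "\<And>N k t. k < K \<Longrightarrow> t \<in> {0..<1} \<Longrightarrow>
       norm (A k t) \<le> norm (Bv k t) + (\<Sum>m\<in>{1..N}. a m * norm (G m k t)) + rho N k"
    and Gb: "\<And>m. NK K (G m) \<le> ennreal (b m) * X"
    and S: "\<And>N. (\<Sum>m\<in>{1..N}. a m * b m) \<le> S" and b: "\<And>m. 0 \<le> b m"
  shows "NK K A \<le> NK K Bv + ennreal S * X"
proof -
  define r where "r N = L2_set (\<lambda>k. rho N k) {..<K}" for N
  have "(\<lambda>N. sqrt (\<Sum>k<K. (rho N k)\<^sup>2)) \<longlonglongrightarrow> sqrt (\<Sum>k<K. 0\<^sup>2)"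
    by (intro tendsto_intros rho_lim)
  then have r_lim: "r \<longlonglongrightarrow> 0" unfolding r_def L2_set_def by simp
  have step: "NK K A \<le> NK K Bv + ennreal S * X + ennreal (r N)" for N
  proof -
    let ?LA = "\<lambda>t. L2_set (\<lambda>k. norm (A k t)) {..<K}"
    let ?LB = "\<lambda>t. L2_set (\<lambda>k. norm (Bv k t)) {..<K}"
    let ?LG = "\<lambda>m t. L2_set (\<lambda>k. norm (G m k t)) {..<K}"
    have pw: "ennreal (?LA t) \<le> ennreal (?LB t) + (\<Sum>m\<in>{1..N}. ennreal (a m) * ennreal (?LG m t)) + ennreal (r N)"
      if t: "t \<in> space mu" for t
    proof -
      have "?LA t \<le> L2_set (\<lambda>k. (norm (Bv k t) + (\<Sum>m\<in>{1..N}. a m * norm (G m k t))) + rho N k) {..<K}"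
        by (rule L2_set_mono) (use pt t in auto)
      also have "\<dots> \<le> L2_set (\<lambda>k. norm (Bv k t) + (\<Sum>m\<in>{1..N}. a m * norm (G m k t))) {..<K} + r N"
        unfolding r_def by (rule L2_set_triangle_ineq)
      also have "\<dots> \<le> ?LB t + L2_set (\<lambda>k. \<Sum>m\<in>{1..N}. a m * norm (G m k t)) {..<K} + r N"
        by (intro add_right_mono L2_set_triangle_ineq)
      also have "\<dots> \<le> ?LB t + (\<Sum>m\<in>{1..N}. L2_set (\<lambda>k. a m * norm (G m k t)) {..<K}) + r N"
        using L2_sum_le[of "{1..N}" "\<lambda>m k. a m * norm (G m k t)" "{..<K}"] by simp
      also have "\<dots> = ?LB t + (\<Sum>m\<in>{1..N}. a m * ?LG m t) + r N"
        by (simp only: L2_set_right_distrib[OF a, symmetric])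
      finally have "ennreal (?LA t) \<le> ennreal (?LB t + (\<Sum>m\<in>{1..N}. a m * ?LG m t) + r N)"
        by (rule ennreal_leI)
      also have "\<dots> = ennreal (?LB t) + ennreal (\<Sum>m\<in>{1..N}. a m * ?LG m t) + ennreal (r N)"
        using a by (simp add: r_def sum_nonneg)
      also have "ennreal (\<Sum>m\<in>{1..N}. a m * ?LG m t) = (\<Sum>m\<in>{1..N}. ennreal (a m) * ennreal (?LG m t))"
        by (subst sum_ennreal[symmetric]) (auto simp: ennreal_mult a)
      finally show ?thesis .
    qed
    have "NK K A \<le> (\<integral>\<^sup>+ t. ennreal (?LB t) + (\<Sum>m\<in>{1..N}. ennreal (a m) * ennreal (?LG m t)) + ennreal (r N) \<partial>mu)"
      unfolding NK_def by (rule nn_integral_mono) (rule pw)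
    also have "\<dots> = NK K Bv + (\<Sum>m\<in>{1..N}. ennreal (a m) * NK K (G m)) + ennreal (r N)"
      unfolding NK_def
      using meas_L2[OF mB] meas_L2[OF mG]
      by (simp add: nn_integral_add nn_integral_sum nn_integral_cmult emeasure_mu)
    also have "(\<Sum>m\<in>{1..N}. ennreal (a m) * NK K (G m)) \<le> (\<Sum>m\<in>{1..N}. ennreal (a m) * (ennreal (b m) * X))"
      by (intro sum_mono mult_left_mono Gb) auto
    also have "\<dots> = ennreal (\<Sum>m\<in>{1..N}. a m * b m) * X"
      using a b by (simp add: ennreal_mult sum_distrib_right mult.assoc sum_nonneg flip: sum_ennreal)
    also have "\<dots> \<le> ennreal S * X" by (intro mult_right_mono ennreal_leI S) auto
    finally show ?thesis by (simp add: add_mono)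
  qed
  show ?thesis
  proof (rule ennreal_le_epsilon)
    fix e :: real assume e: "0 < e"
    from LIMSEQ_D[OF r_lim e] obtain N where "\<forall>n\<ge>N. norm (r n - 0) < e" by blast
    then have "r N \<le> e" by auto
    then have "NK K Bv + ennreal S * X + ennreal (r N) \<le> NK K Bv + ennreal S * X + ennreal e"
      by (intro add_left_mono ennreal_leI)
    with step[of N] show "NK K A \<le> NK K Bv + ennreal S * X + ennreal e" by order
  qed
qed

lemma zero_H1: "(\<lambda>t. 0) \<in> H1 n"
  unfolding H1_def by (rule CollectI, rule exI[of _ "\<lambda>j. 0"]) simp

lemma TP_cont: "continuous_on S (TP c n m)"
  by (rule continuous_on_vector_derivative, rule has_vector_derivative_at_within, rule TP_deriv)

lemma TP_meas: "TP c n m \<in> borel_measurable lborel"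
  by (simp add: borel_measurable_continuous_onI TP_cont)

lemma norm_TP_le: "norm (TP c n 0 t) \<le> (\<Sum>j\<le>n. norm (c j))"
  unfolding TP_def by (rule order_trans[OF norm_sum]) (simp add: norm_mult)

lemma NK_cong: "(\<And>k t. k < K \<Longrightarrow> norm (g k t) = norm (h k t)) \<Longrightarrow> NK K g = NK K h"
  unfolding NK_def by (intro nn_integral_cong arg_cong[where f=ennreal] L2_set_cong) auto

lemma absorb:
  fixes X Y :: ennreal
  assumes X: "X = ennreal x" "0 \<le> x" and le: "X \<le> Y + ennreal \<delta> * X" and d: "0 \<le> \<delta>"
    and c: "1 \<le> c * (1 - \<delta>)" "0 \<le> c"
  shows "X \<le> ennreal c * Y"
proof (cases Y)
  case top
  have "c \<noteq> 0" using c by auto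
  then have "c > 0" using c by auto
  then show ?thesis using top by (simp add: ennreal_mult_top)
next
  case (real y)
  have "ennreal x \<le> ennreal (y + \<delta> * x)"
    using le X real d by (simp add: ennreal_mult)
  then have "x \<le> y + \<delta> * x" using real d X by (subst (asm) ennreal_le_iff) auto
  then have "(1 - \<delta>) * x \<le> y" by (simp add: algebra_simps)
  then have "c * ((1 - \<delta>) * x) \<le> c * y" using c by (intro mult_left_mono) auto
  moreover have "x \<le> c * (1 - \<delta>) * x" using mult_right_mono[OF c(1) X(2)] by simp
  ultimately have "x \<le> c * y" by (simp add: mult.assoc)
  then show ?thesis using X real c by (simp add: ennreal_mult[symmetric])
qed

theorem lemma2p10:
  fixes \<alpha> C \<epsilon> :: real and d M :: "nat \<Rightarrow> nat" and f :: "nat \<Rightarrow> real \<Rightarrow> complex"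
  assumes alpha_pos: "\<alpha> > 0"
    and d_pos: "\<And>k. d k > 0"
    and d_lac: "\<And>k. real (d (Suc k)) \<ge> (1 + \<alpha>) * real (d k)"
    and C_pos: "C > 0"
    and C_bern: "\<And>g. (\<And>k. g k \<in> H1 (d k)) \<Longrightarrow>
        L1l2 (\<lambda>k t. vector_derivative (g k) (at t) / of_nat (d k)) \<le> ennreal C * L1l2 g"
    and f_H1: "\<And>k. f k \<in> H1 (d k)"
    and eps: "0 < \<epsilon>" "\<epsilon> < 1/2"
    and M_pos: "\<And>k. M k > 0"
    and dM: "\<And>k. real (d k) \<le> \<epsilon> / C * real (M k)"
  shows "ennreal (1 - \<epsilon>) * L1l2 (\<lambda>k. condE (M k) (\<lambda>t. cmod (f k t))) \<le> L1l2 f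
       \<and> L1l2 f \<le> ennreal ((1 - \<epsilon>) / (1 - 2 * \<epsilon>)) * L1l2 (\<lambda>k. condE (M k) (f k))"
proof -
  have "\<forall>k. \<exists>c. \<forall>t. f k t = (\<Sum>j\<le>d k. c j * exp (2 * of_real pi * \<i> * of_nat j * of_real t))"
  proof
    fix k show "\<exists>c. \<forall>t. f k t = (\<Sum>j\<le>d k. c j * exp (2 * of_real pi * \<i> * of_nat j * of_real t))"
      using f_H1[of k] unfolding H1_def mem_Collect_eq .
  qed
  from choice[OF this] obtain c where c0: "\<forall>k t. f k t = (\<Sum>j\<le>d k. c k j * exp (2 * of_real pi * \<i> * of_nat j * of_real t))"
    by (elim exE) 
  have c: "\<And>k t. f k t = (\<Sum>j\<le>d k. c k j * exp (2 * of_real pi * \<i> * of_nat j * of_real t))"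
    using c0 by blast
  have fTP: "f k t = TP (c k) (d k) 0 t" for k t unfolding c TP_def ee_def by simp
  define Bk where "Bk k = (\<Sum>j\<le>d k. norm (c k j))" for k
  define Rm where "Rm N r = exp r - (\<Sum>m\<le>N. r^m /\<^sub>R fact m)" for N and r :: real
  define rho where "rho N k = Bk k * Rm N (2*pi*d k / M k)" for N k
  define a where "a m = (\<epsilon> / C)^m / fact m" for m :: nat
  have Rm0: "0 \<le> Rm N r" if "0 \<le> r" for N r
    using exp_rem[of "0::real" r N] that unfolding Rm_def by simp
  have rho0: "0 \<le> rho N k" for N k
    unfolding rho_def Bk_def by (intro mult_nonneg_nonneg sum_nonneg Rm0) auto
  have rho_lim: "(\<lambda>N. rho N k) \<longlonglongrightarrow> 0" for k
    unfolding rho_def Rm_def using tendsto_mult_left[OF exp_rem_tendsto, of "Bk k"] by simp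
  have a0: "0 \<le> a m" for m unfolding a_def using eps C_pos by (intro divide_nonneg_nonneg zero_le_power) auto
  have S: "(\<Sum>m\<in>{1..N}. a m * C^m) \<le> exp \<epsilon> - 1" for N
  proof -
    have "(\<Sum>m\<in>{1..N}. a m * C^m) = (\<Sum>m\<in>{1..N}. \<epsilon>^m / fact m)"
    proof (intro sum.cong refl)
      fix m
      have "(\<epsilon> / C)^m * C^m = \<epsilon>^m" using C_pos by (simp add: power_mult_distrib[symmetric])
      then show "a m * C^m = \<epsilon>^m / fact m" unfolding a_def by (metis mult.commute times_divide_eq_left)
    qed
    moreover have "(\<Sum>m\<le>N. \<epsilon>^m / fact m) = (\<Sum>m\<le>N. \<epsilon>^m /\<^sub>R fact m)"
      by (intro sum.cong refl) (simp add: divide_inverse_commute)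
    moreover have "(\<Sum>m\<le>N. \<epsilon>^m / fact m) = 1 + (\<Sum>m\<in>{1..N}. \<epsilon>^m / fact m)"
      using sum_head0[of "\<lambda>m. \<epsilon>^m / fact m" N] by simp
    moreover have "0 \<le> exp \<epsilon> - (\<Sum>m\<le>N. \<epsilon>^m /\<^sub>R fact m)"
      using Rm0[of \<epsilon> N] eps unfolding Rm_def by simp
    ultimately show ?thesis by linarith
  qed
  have expe: "(1 - \<epsilon>) * exp \<epsilon> \<le> 1"
  proof -
    have "1 - \<epsilon> \<le> exp (-\<epsilon>)" using exp_ge_add_one_self[of "-\<epsilon>"] by simp
    then have "(1 - \<epsilon>) * exp \<epsilon> \<le> exp (-\<epsilon>) * exp \<epsilon>" by (intro mult_right_mono) auto
    then show ?thesis by (simp add: exp_minus)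
  qed
  have taylor: "norm (f k s - f k t) \<le> (\<Sum>m\<in>{1..N}. a m * (norm (TP (c k) (d k) m t) / real (d k) ^ m)) + rho N k"
    if st: "\<bar>s - t\<bar> \<le> 1 / real (M k)" for k s t N
  proof -
    let ?T = "\<lambda>m. TP (c k) (d k) m t"
    have Mk: "real (M k) > 0" using M_pos by simp
    have dk: "real (d k) > 0" using d_pos by simp
    have dq: "real (d k) / real (M k) \<le> \<epsilon> / C" using dM[of k] Mk by (simp add: field_simps)
    have "norm (f k s - f k t) \<le> norm (f k s - f k t - (\<Sum>m\<in>{1..N}. ?T m * of_real ((s-t)^m / fact m)))
        + norm (\<Sum>m\<in>{1..N}. ?T m * of_real ((s-t)^m / fact m))"
      by (rule order_trans[OF _ norm_triangle_ineq]) simp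
    also have "norm (f k s - f k t - (\<Sum>m\<in>{1..N}. ?T m * of_real ((s-t)^m / fact m)))
        \<le> Bk k * Rm N (2*pi*d k*\<bar>s-t\<bar>)"
      unfolding fTP Bk_def Rm_def by (rule TP_taylor)
    also have "\<dots> \<le> rho N k"
      unfolding rho_def Rm_def Bk_def
    proof (intro mult_left_mono exp_rem_mono sum_nonneg)
      show "2 * pi * real (d k) * \<bar>s - t\<bar> \<le> 2 * pi * real (d k) / real (M k)"
        using st mult_left_mono[OF st, of "2*pi*d k"] by simp
    qed auto
    also have "norm (\<Sum>m\<in>{1..N}. ?T m * of_real ((s-t)^m / fact m)) \<le> (\<Sum>m\<in>{1..N}. a m * (norm (?T m) / real (d k) ^ m))"
    proof (rule order_trans[OF norm_sum], rule sum_mono)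
      fix m assume "m \<in> {1..N}"
      have "norm (?T m * of_real ((s-t)^m / fact m)) = norm (?T m) * (\<bar>s-t\<bar>^m / fact m)"
        by (simp only: norm_mult norm_of_real) (simp add: power_abs)
      also have "\<dots> \<le> norm (?T m) * ((1 / real (M k))^m / fact m)"
        by (intro mult_left_mono divide_right_mono power_mono st) auto
      also have "norm (?T m) * ((1 / real (M k))^m / fact m) = (real (d k) / real (M k))^m * (norm (?T m) / real (d k)^m) / fact m"
        using dk by (simp add: power_divide)
      also have "\<dots> \<le> (\<epsilon> / C)^m * (norm (?T m) / real (d k)^m) / fact m"
        using dq dk Mk by (intro divide_right_mono mult_right_mono power_mono) auto
      also have "\<dots> = a m * (norm (?T m) / real (d k) ^ m)" unfolding a_def by simp
      finally show "norm (?T m * of_real ((s-t)^m / fact m)) \<le> a m * (norm (?T m) / real (d k) ^ m)" .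
    qed
    finally show ?thesis by simp
  qed
  have fcont: "continuous_on S (f k)" for k S
    unfolding fTP[abs_def] by (rule TP_cont)
  have fmeas: "f k \<in> borel_measurable lborel" for k
    unfolding fTP[abs_def] by (rule TP_meas)
  have main: "NK K (\<lambda>k. condE (M k) (\<lambda>t. cmod (f k t))) \<le> NK K f + ennreal (exp \<epsilon> - 1) * NK K f
      \<and> NK K f \<le> NK K (\<lambda>k. condE (M k) (f k)) + ennreal (exp \<epsilon> - 1) * NK K f" for K
  proof -
    define G where "G m k t = (if k < K then TP (c k) (d k) m t / of_nat (d k) ^ m else 0)" for m k t
    have GH1: "G m k \<in> H1 (d k)" for m k
      by (cases "k < K") (simp_all add: G_def[abs_def] TP_H1 zero_H1)
    have Gder: "(\<lambda>t. vector_derivative (G m k) (at t) / of_nat (d k)) = G (Suc m) k" for m k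
    proof (cases "k < K")
      case True
      have hd: "(G m k has_vector_derivative TP (c k) (d k) (Suc m) t / of_nat (d k) ^ m) (at t)" for t
        unfolding G_def[abs_def] using True by (simp add: has_vector_derivative_divide TP_deriv)
      show ?thesis
      proof
        fix t
        have "vector_derivative (G m k) (at t) = TP (c k) (d k) (Suc m) t / of_nat (d k) ^ m"
          by (rule vector_derivative_at[OF hd])
        then show "vector_derivative (G m k) (at t) / of_nat (d k) = G (Suc m) k t"
          using True by (simp add: G_def divide_divide_eq_left mult.commute)
      qed
    next
      case False
      then have "G m k = (\<lambda>t. 0)" "G (Suc m) k = (\<lambda>t. 0)" by (auto simp: G_def[abs_def])
      then show ?thesis by (simp add: vector_derivative_at[OF has_vector_derivative_const])
    qed
    have Gtr: "L1l2 (G m) = NK K (G m)" for m by (rule L1l2_trunc) (simp add: G_def)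
    have Gstep: "NK K (G (Suc m)) \<le> ennreal C * NK K (G m)" for m
      using C_bern[of "G m", OF GH1] unfolding Gder Gtr by simp
    have Gb: "NK K (G m) \<le> ennreal (C^m) * NK K f" for m
    proof (induction m)
      case 0
      have "NK K (G 0) = NK K f" by (rule NK_cong) (simp add: G_def fTP)
      then show ?case by simp
    next
      case (Suc m)
      have "NK K (G (Suc m)) \<le> ennreal C * NK K (G m)" by (rule Gstep)
      also have "\<dots> \<le> ennreal C * (ennreal (C^m) * NK K f)" by (intro mult_left_mono Suc) auto
      finally show ?case using C_pos by (simp add: ennreal_mult mult.assoc)
    qed
    have Gmeas: "G m k \<in> borel_measurable lborel" for m k
      using d_pos[of k] by (cases "k < K") (auto simp: G_def[abs_def] intro!: borel_measurable_continuous_onI continuous_intros TP_cont)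
    have bd: "norm (f k s - f k t) \<le> (\<Sum>m\<in>{1..N}. a m * norm (G m k t)) + rho N k"
      if "k < K" "\<bar>s - t\<bar> \<le> 1 / real (M k)" for k s t N
      using taylor[OF that(2), of N] that(1) by (simp add: G_def norm_divide norm_power)
    have Phi0: "0 \<le> (\<Sum>m\<in>{1..N}. a m * norm (G m k t)) + rho N k" for N k t
      using a0 rho0 by (intro add_nonneg_nonneg sum_nonneg mult_nonneg_nonneg) auto
    have mE1: "condE (M k) (\<lambda>t. cmod (f k t)) \<in> borel_measurable lborel" for k
      unfolding condE_def by measurable
    have mE2: "condE (M k) (f k) \<in> borel_measurable lborel" for k
      unfolding condE_def by measurable
    have I: "NK K (\<lambda>k. condE (M k) (\<lambda>t. cmod (f k t))) \<le> NK K f + ennreal (exp \<epsilon> - 1) * NK K f"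
    proof (rule core[where G = G and a = a and rho = rho and b = "\<lambda>m. C^m"])
      fix N k t assume k: "k < K" and t: "t \<in> {0..<1::real}"
      have "norm (condE (M k) (\<lambda>t. cmod (f k t)) t - cmod (f k t)) \<le> (\<Sum>m\<in>{1..N}. a m * norm (G m k t)) + rho N k"
      proof (rule condE_bound[OF M_pos t _ Phi0])
        show "continuous_on {0..1} (\<lambda>t. cmod (f k t))" by (intro continuous_intros fcont)
        fix s assume "\<bar>s - t\<bar> \<le> 1 / real (M k)"
        from bd[OF k this, of N] show "norm (cmod (f k s) - cmod (f k t)) \<le> (\<Sum>m\<in>{1..N}. a m * norm (G m k t)) + rho N k"
          by (metis norm_triangle_ineq3 order_trans real_norm_def)
      qed
      then show "norm (condE (M k) (\<lambda>t. cmod (f k t)) t) \<le> norm (f k t) + (\<Sum>m\<in>{1..N}. a m * norm (G m k t)) + rho N k"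
        using norm_ge_zero[of "f k t"] by (simp add: abs_le_iff; linarith)
    qed (use mE1 fmeas Gmeas a0 rho0 rho_lim Gb S C_pos in auto)
    have II: "NK K f \<le> NK K (\<lambda>k. condE (M k) (f k)) + ennreal (exp \<epsilon> - 1) * NK K f"
    proof (rule core[where G = G and a = a and rho = rho and b = "\<lambda>m. C^m"])
      fix N k t assume k: "k < K" and t: "t \<in> {0..<1::real}"
      have "norm (condE (M k) (f k) t - f k t) \<le> (\<Sum>m\<in>{1..N}. a m * norm (G m k t)) + rho N k"
      proof (rule condE_bound[OF M_pos t fcont Phi0])
        fix s assume "\<bar>s - t\<bar> \<le> 1 / real (M k)"
        from bd[OF k this, of N] show "norm (f k s - f k t) \<le> (\<Sum>m\<in>{1..N}. a m * norm (G m k t)) + rho N k" .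
      qed
      then show "norm (f k t) \<le> norm (condE (M k) (f k) t) + (\<Sum>m\<in>{1..N}. a m * norm (G m k t)) + rho N k"
        by (metis (no_types, lifting) add.assoc add_le_cancel_left norm_minus_commute norm_triangle_sub order_trans)
    qed (use mE2 fmeas Gmeas a0 rho0 rho_lim Gb S C_pos in auto)
    from I II show ?thesis by blast
  qed
  have first: "L1l2 (\<lambda>k. condE (M k) (\<lambda>t. cmod (f k t))) \<le> ennreal (exp \<epsilon>) * L1l2 f"
  proof -
    have mE1: "condE (M k) (\<lambda>t. cmod (f k t)) \<in> borel_measurable lborel" for k
      unfolding condE_def by measurable
    have "L1l2 (\<lambda>k. condE (M k) (\<lambda>t. cmod (f k t))) \<le> (SUP K. NK K (\<lambda>k. condE (M k) (\<lambda>t. cmod (f k t))))"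
      by (rule L1l2_le_SUP[OF mE1])
    also have "\<dots> \<le> ennreal (exp \<epsilon>) * L1l2 f"
    proof (rule SUP_least)
      fix K
      have "NK K (\<lambda>k. condE (M k) (\<lambda>t. cmod (f k t))) \<le> NK K f + ennreal (exp \<epsilon> - 1) * NK K f"
        using main by blast
      also have "\<dots> = ennreal (exp \<epsilon>) * NK K f"
      proof -
        have h: "0 \<le> exp \<epsilon> - 1" using eps by simp
        have "ennreal (exp \<epsilon>) = ennreal (1 + (exp \<epsilon> - 1))" by simp
        also have "\<dots> = 1 + ennreal (exp \<epsilon> - 1)" by (simp only: ennreal_plus[OF zero_le_one h] ennreal_1)
        finally have "ennreal (exp \<epsilon>) = 1 + ennreal (exp \<epsilon> - 1)" .
        then show ?thesis by (simp add: distrib_right)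
      qed
      also have "\<dots> \<le> ennreal (exp \<epsilon>) * L1l2 f" by (intro mult_left_mono NK_le_L1l2) auto
      finally show "NK K (\<lambda>k. condE (M k) (\<lambda>t. cmod (f k t))) \<le> ennreal (exp \<epsilon>) * L1l2 f" .
    qed
    finally show ?thesis .
  qed
  have P1: "ennreal (1 - \<epsilon>) * L1l2 (\<lambda>k. condE (M k) (\<lambda>t. cmod (f k t))) \<le> L1l2 f"
  proof -
    have "ennreal (1 - \<epsilon>) * L1l2 (\<lambda>k. condE (M k) (\<lambda>t. cmod (f k t))) \<le> ennreal (1 - \<epsilon>) * (ennreal (exp \<epsilon>) * L1l2 f)"
      by (intro mult_left_mono first) auto
    also have "\<dots> = ennreal ((1 - \<epsilon>) * exp \<epsilon>) * L1l2 f" using eps by (simp add: ennreal_mult mult.assoc)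
    also have "\<dots> \<le> 1 * L1l2 f" by (intro mult_right_mono) (use expe in auto)
    finally show ?thesis by simp
  qed
  define cc where "cc = (1 - \<epsilon>) / (1 - 2 * \<epsilon>)"
  have cc: "1 \<le> cc * (1 - (exp \<epsilon> - 1))" "0 \<le> cc"
  proof -
    have pos: "1 - 2 * \<epsilon> > 0" using eps by simp
    have "1 - 2*\<epsilon> \<le> (1 - \<epsilon>) * (2 - exp \<epsilon>)" using expe by (simp add: algebra_simps)
    then show "1 \<le> cc * (1 - (exp \<epsilon> - 1))" unfolding cc_def using pos by (simp add: field_simps)
    show "0 \<le> cc" unfolding cc_def using eps by simp
  qed
  have P2: "L1l2 f \<le> ennreal cc * L1l2 (\<lambda>k. condE (M k) (f k))"
  proof -
    have "L1l2 f \<le> (SUP K. NK K f)" by (rule L1l2_le_SUP[OF fmeas])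
    also have "\<dots> \<le> ennreal cc * L1l2 (\<lambda>k. condE (M k) (f k))"
    proof (rule SUP_least)
      fix K
      have fin: "NK K f \<le> ennreal (\<Sum>k<K. Bk k)"
      proof -
        have "NK K f \<le> (\<integral>\<^sup>+ t. ennreal (\<Sum>k<K. Bk k) \<partial>mu)"
          unfolding NK_def
        proof (rule nn_integral_mono, rule ennreal_leI)
          fix t
          have "L2_set (\<lambda>k. norm (f k t)) {..<K} \<le> (\<Sum>k<K. norm (f k t))" by (rule L2_set_le_sum) auto
          also have "\<dots> \<le> (\<Sum>k<K. Bk k)" unfolding fTP Bk_def by (intro sum_mono norm_TP_le)
          finally show "L2_set (\<lambda>k. norm (f k t)) {..<K} \<le> (\<Sum>k<K. Bk k)" .
        qed
        also have "\<dots> = ennreal (\<Sum>k<K. Bk k)" by (simp add: emeasure_mu)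
        finally show ?thesis .
      qed
      then obtain x where x: "NK K f = ennreal x" "0 \<le> x"
        by (metis ennreal_cases ennreal_less_top top.not_eq_extremum le_less_trans less_irrefl)
      have "NK K f \<le> ennreal cc * NK K (\<lambda>k. condE (M k) (f k))"
        by (rule absorb[OF x _ _ cc]) (use main eps in auto)
      also have "\<dots> \<le> ennreal cc * L1l2 (\<lambda>k. condE (M k) (f k))"
        by (intro mult_left_mono NK_le_L1l2) auto
      finally show "NK K f \<le> ennreal cc * L1l2 (\<lambda>k. condE (M k) (f k))" .
    qed
    finally show ?thesis .
  qed
  show ?thesis using P1 P2 unfolding cc_def by blast
qed

end
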